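(* Let $n,k\ge 1$, let $f\in\mathcal{B}_c$, and let $X=(X_1,\dots,X_n)$ be a random vector in $\mathbb{R}^n$ (the $X_i$ possibly dependent) such that $P(|X_i|\ge u)\le f(u)$ for all $u\ge 0$ and all $i$. Let $g(x)=\sum_{i=1}^m a_i\,\mu_i(x)+C$, where $C\in\mathbb{R}$ and $\sum_i a_i\mu_i$ is a (nonzero) homogeneous polynomial of degree $k$ in $x_1,\dots,x_n$ written with distinct monomials $\mu_i$ and coefficients $a_i$. Then for all $t\ge C$, $$P(g(X)\ge t)\le n\, f\!\left(\frac{(t-C)^{1/k}}{\left(\sum_i |a_i|\right)^{1/k}}\right).$$
   Context: $\mathcal{B}_c$ is the set of functions $f:[0,\infty)\to(0,\infty)$ that are continuous, strictly decreasing, satisfy $f(0)\ge 1$ and $\lim_{u\to\infty}f(u)=0$. *)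

theory Defs
  imports "HOL-Probability.Probability"
begin

definition Bc :: "(real \<Rightarrow> real) set" where
  "Bc = {f. continuous_on {0..} f \<and> (\<forall>u\<ge>0. f u > 0) \<and> strict_antimono_on {0..} f
            \<and> f 0 \<ge> 1 \<and> (f \<longlongrightarrow> 0) at_top}"

definition monomial_eval :: "nat \<Rightarrow> (nat \<Rightarrow> nat) \<Rightarrow> (nat \<Rightarrow> real) \<Rightarrow> real" where
  "monomial_eval n e x = (\<Prod>i<n. x i ^ e i)"

definition is_monomial_exp :: "nat \<Rightarrow> nat \<Rightarrow> (nat \<Rightarrow> nat) \<Rightarrow> bool" where
  "is_monomial_exp n k e \<longleftrightarrow> (\<forall>i\<ge>n. e i = 0) \<and> (\<Sum>i<n. e i) = k"

end

theory Submission
  imports Defs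
begin

lemma mono_bound:
  fixes x :: "nat \<Rightarrow> real"
  assumes "is_monomial_exp n k e" and "\<And>i. i < n \<Longrightarrow> \<bar>x i\<bar> \<le> m"
  shows "\<bar>monomial_eval n e x\<bar> \<le> m ^ k"
proof -
  have "\<bar>monomial_eval n e x\<bar> = (\<Prod>i<n. \<bar>x i\<bar> ^ e i)"
    unfolding monomial_eval_def by (simp add: abs_prod power_abs)
  also have "\<dots> \<le> (\<Prod>i<n. m ^ e i)"
    by (rule prod_mono) (auto intro: power_mono assms(2))
  also have "\<dots> = m ^ (\<Sum>i<n. e i)" by (simp add: power_sum)
  also have "\<dots> = m ^ k" using assms(1) unfolding is_monomial_exp_def by simp
  finally show ?thesis .
qed

theorem corollary3:
  fixes M :: "'a measure" and X :: "nat \<Rightarrow> 'a \<Rightarrow> real"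
    and n k :: nat and f :: "real \<Rightarrow> real"
    and S :: "(nat \<Rightarrow> nat) set" and a :: "(nat \<Rightarrow> nat) \<Rightarrow> real"
    and C t :: real
  assumes "prob_space M"
    and "n \<ge> 1" and "k \<ge> 1"
    and "f \<in> Bc"
    and "\<And>i. i < n \<Longrightarrow> X i \<in> borel_measurable M"
    and "\<And>i u. i < n \<Longrightarrow> u \<ge> 0 \<Longrightarrow>
           measure M {\<omega> \<in> space M. \<bar>X i \<omega>\<bar> \<ge> u} \<le> f u"
    and "finite S" and "\<And>e. e \<in> S \<Longrightarrow> is_monomial_exp n k e"
    and "\<exists>e\<in>S. a e \<noteq> 0"
    and "t \<ge> C"
  shows "measure M {\<omega> \<in> space M.
            (\<Sum>e\<in>S. a e * monomial_eval n e (\<lambda>i. X i \<omega>)) + C \<ge> t}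
         \<le> real n * f ((t - C) powr (1 / real k) / (\<Sum>e\<in>S. \<bar>a e\<bar>) powr (1 / real k))"
proof -
  interpret prob_space M by fact
  define A where "A = (\<Sum>e\<in>S. \<bar>a e\<bar>)"
  have Apos: "A > 0"
  proof -
    obtain e where "e \<in> S" "a e \<noteq> 0" using assms(9) by blast
    hence "\<bar>a e\<bar> \<le> A" unfolding A_def
      using assms(7) by (intro member_le_sum) auto
    with \<open>a e \<noteq> 0\<close> show ?thesis by simp
  qed
  define s where "s = (t - C) powr (1 / real k) / A powr (1 / real k)"
  have s_nn: "s \<ge> 0" unfolding s_def by simp
  have fpos: "\<And>u. u \<ge> 0 \<Longrightarrow> f u > 0" and f0: "f 0 \<ge> 1"
    using assms(4) unfolding Bc_def by auto
  define G where "G = {\<omega> \<in> space M. (\<Sum>e\<in>S. a e * monomial_eval n e (\<lambda>i. X i \<omega>)) + C \<ge> t}"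
  show ?thesis
  proof (cases "t = C")
    case True
    have "measure M G \<le> 1" by simp
    also have "\<dots> \<le> f 0" by (rule f0)
    also have "\<dots> \<le> real n * f 0" using assms(2) f0 by simp
    finally show ?thesis using True unfolding G_def by simp
  next
    case False
    hence tc: "t - C > 0" using assms(10) by simp
    have s_pos: "s > 0" unfolding s_def using tc Apos by simp
    have sk: "A * s ^ k = t - C"
    proof -
      have "s = ((t - C) / A) powr (1 / real k)" unfolding s_def
        using tc Apos by (simp add: powr_divide)
      hence "s ^ k = ((t - C) / A) powr (real k * (1 / real k))"
        using tc Apos by (simp add: powr_realpow [symmetric] powr_powr mult.commute)
      also have "\<dots> = (t - C) / A" using assms(3) tc Apos by simp
      finally show ?thesis using Apos by simp
    qed
    define U where "U = (\<Union>i<n. {\<omega> \<in> space M. \<bar>X i \<omega>\<bar> \<ge> s})"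
    have Usets: "\<And>i. i < n \<Longrightarrow> {\<omega> \<in> space M. \<bar>X i \<omega>\<bar> \<ge> s} \<in> events"
      using assms(5) by measurable
    have sub: "G \<subseteq> U"
    proof
      fix \<omega> assume w: "\<omega> \<in> G"
      show "\<omega> \<in> U"
      proof (rule ccontr)
        assume "\<omega> \<notin> U"
        hence lt: "\<And>i. i < n \<Longrightarrow> \<bar>X i \<omega>\<bar> < s" using w unfolding U_def G_def by force
        define m where "m = Max ((\<lambda>i. \<bar>X i \<omega>\<bar>) ` {..<n})"
        have ne: "{..<n} \<noteq> {}" using assms(2) by (simp add: lessThan_empty_iff)
        have mle: "\<And>i. i < n \<Longrightarrow> \<bar>X i \<omega>\<bar> \<le> m" unfolding m_def by auto
        have mlt: "m < s" unfolding m_def using ne lt by auto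
        have m0: "m \<ge> 0" using mle[of 0] assms(2) by auto
        have "(\<Sum>e\<in>S. a e * monomial_eval n e (\<lambda>i. X i \<omega>)) \<le> (\<Sum>e\<in>S. \<bar>a e\<bar> * m ^ k)"
        proof (rule sum_mono)
          fix e assume "e \<in> S"
          have "\<bar>monomial_eval n e (\<lambda>i. X i \<omega>)\<bar> \<le> m ^ k"
            by (rule mono_bound[OF assms(8)[OF \<open>e \<in> S\<close>]]) (simp add: mle)
          hence "\<bar>a e * monomial_eval n e (\<lambda>i. X i \<omega>)\<bar> \<le> \<bar>a e\<bar> * m ^ k"
            by (simp add: abs_mult mult_left_mono)
          thus "a e * monomial_eval n e (\<lambda>i. X i \<omega>) \<le> \<bar>a e\<bar> * m ^ k" by linarith
        qed
        also have "\<dots> = A * m ^ k" unfolding A_def by (simp add: sum_distrib_right)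
        also have "\<dots> < A * s ^ k"
          using Apos m0 mlt assms(3) by (simp add: power_strict_mono)
        finally show False using w sk unfolding G_def by simp
      qed
    qed
    have "measure M G \<le> measure M U"
      by (rule finite_measure_mono[OF sub]) (use Usets in \<open>auto simp: U_def\<close>)
    also have "\<dots> \<le> (\<Sum>i<n. measure M {\<omega> \<in> space M. \<bar>X i \<omega>\<bar> \<ge> s})"
      unfolding U_def by (rule finite_measure_subadditive_finite) (use Usets in auto)
    also have "\<dots> \<le> (\<Sum>i<n. f s)" by (rule sum_mono) (use assms(6) s_nn in auto)
    also have "\<dots> = real n * f s" by simp
    finally show ?thesis unfolding G_def s_def A_def .
  qed
qed

end
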